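(* Let $K$ be a field with $\operatorname{char}(K)\neq2$ and let $(M,N,(\cdot_1,\cdot_2),\partial,(\{-,-\},\langle-,-\rangle))$ be a braided crossed module of Leibniz $K$-algebras such that $\{n,n'\}=-\langle n',n\rangle$ for all $n,n'\in N$. Then $m\cdot_2n=-n\cdot_1m$ for all $m\in M$, $n\in N$, and $(M,N,\cdot_1,\partial,\{-,-\})$ is a braided crossed module of Lie $K$-algebras (in particular $M$ and $N$ are Lie $K$-algebras).
   Context: A Leibniz $K$-algebra: bilinear bracket with $[x,[y,z]]=[[x,y],z]-[[x,z],y]$. Leibniz action of $N$ on $M$: bilinear $\cdot_1\colon N\times M\to M$, $\cdot_2\colon M\times N\to M$ with $n\cdot_1[m,m']=[n\cdot_1m,m']-[n\cdot_1m',m]$; $[m,n\cdot_1m']=[m\cdot_2n,m']-[m,m']\cdot_2n$; $[m,m'\cdot_2n]=[m,m']\cdot_2n-[m\cdot_2n,m']$; $m\cdot_2[n,n']=(m\cdot_2n)\cdot_2n'-(m\cdot_2n')\cdot_2n$; $n\cdot_1(m\cdot_2n')=(n\cdot_1m)\cdot_2n'-[n,n']\cdot_1m$; $n\cdot_1(n'\cdot_1m)=[n,n']\cdot_1m-(n\cdot_1m)\cdot_2n'$. Crossed module of Leibniz algebras: such an action with a Leibniz homomorphism $\partial\colon M\to N$, $\partial(n\cdot_1m)=[n,\partial m]$, $\partial(m\cdot_2n)=[\partial m,n]$, $\partial(m)\cdot_1m'=[m,m']=m\cdot_2\partial(m')$. Braiding: bilinear $\{-,-\},\langle-,-\rangle\colon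 N\times N\to M$ with $\partial\{n,n'\}=[n,n']=\partial\langle n,n'\rangle$; $\{\partial m,\partial m'\}=[m,m']=\langle\partial m,\partial m'\rangle$; $\{\partial m,n\}=m\cdot_2n=\langle\partial m,n\rangle$; $\{n,\partial m\}=n\cdot_1m=\langle n,\partial m\rangle$; $\{n,[n',n'']\}=\{[n,n'],n''\}-\{[n,n''],n'\}$; $\langle n,[n',n'']\rangle=\{[n,n'],n''\}-\langle[n,n''],n'\rangle$; $\{n,[n',n'']\}=\{[n,n'],n''\}-\langle[n,n''],n'\rangle$; $\langle n,[n',n'']\rangle=\langle[n,n'],n''\rangle-\langle[n,n''],n'\rangle$. A Lie action of a Lie algebra $N$ on a Lie algebra $M$ is a bilinear $\cdot\colon N\times M\to M$ with $[n,n']\cdot m=n\cdot(n'\cdot m)-n'\cdot(n\cdot m)$ and $n\cdot[m,m']=[n\cdot m,m']+[m,n\cdot m']$. A crossed module of Lie algebras $(M,N,\cdot,\partial)$: Lie action and Lie homomorphism $\partial$ with $\partial(n\cdot m)=[n,\partial m]$ and $\partial(m)\cdot m'=[m,m']$. A braiding on it is a bilinear $\{-,-\}\colon N\times N\to M$ with $\partial\{n,n'\}=[n,n']$; $\{\partial m,\partial m'\}=[m,m']$; $\{\partial m,n\}=-n\cdot m$; $\{n,\partial m\}=n\cdot m$; $\{n,[n',n'']\}=\{[n,n'],n''\}-\{[n,n''],n'\}$; $\{[n,n'],n''\}=\{n,[n',n'']\}-\{n',[n,n'']\}$. *)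

theory Defs
  imports Main "HOL.Vector_Spaces"
begin

definition bilinear_map ::
  "('k::field \<Rightarrow> 'a::ab_group_add \<Rightarrow> 'a) \<Rightarrow> ('k \<Rightarrow> 'b::ab_group_add \<Rightarrow> 'b) \<Rightarrow>
   ('k \<Rightarrow> 'c::ab_group_add \<Rightarrow> 'c) \<Rightarrow> ('a \<Rightarrow> 'b \<Rightarrow> 'c) \<Rightarrow> bool" where
  "bilinear_map sA sB sC f \<longleftrightarrow>
     (\<forall>x. Vector_Spaces.linear sB sC (f x)) \<and> (\<forall>y. Vector_Spaces.linear sA sC (\<lambda>x. f x y))"

definition leibniz_algebra :: "('k::field \<Rightarrow> 'a::ab_group_add \<Rightarrow> 'a) \<Rightarrow> ('a \<Rightarrow> 'a \<Rightarrow> 'a) \<Rightarrow> bool" where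
  "leibniz_algebra s br \<longleftrightarrow> vector_space s \<and> bilinear_map s s s br \<and>
     (\<forall>x y z. br x (br y z) = br (br x y) z - br (br x z) y)"

definition lie_algebra :: "('k::field \<Rightarrow> 'a::ab_group_add \<Rightarrow> 'a) \<Rightarrow> ('a \<Rightarrow> 'a \<Rightarrow> 'a) \<Rightarrow> bool" where
  "lie_algebra s br \<longleftrightarrow> vector_space s \<and> bilinear_map s s s br \<and>
     (\<forall>x. br x x = 0) \<and>
     (\<forall>x y z. br x (br y z) + br y (br z x) + br z (br x y) = 0)"

definition leibniz_hom ::
  "('k::field \<Rightarrow> 'a::ab_group_add \<Rightarrow> 'a) \<Rightarrow> ('a \<Rightarrow> 'a \<Rightarrow> 'a) \<Rightarrow>
   ('k \<Rightarrow> 'b::ab_group_add \<Rightarrow> 'b) \<Rightarrow> ('b \<Rightarrow> 'b \<Rightarrow> 'b) \<Rightarrow> ('a \<Rightarrow> 'b) \<Rightarrow> bool" where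
  "leibniz_hom sA brA sB brB f \<longleftrightarrow> Vector_Spaces.linear sA sB f \<and>
     (\<forall>x y. f (brA x y) = brB (f x) (f y))"

text \<open>Leibniz action of N on M: act1 = \<open>\<cdot>\<^sub>1\<close> : N \<times> M \<rightarrow> M, act2 = \<open>\<cdot>\<^sub>2\<close> : M \<times> N \<rightarrow> M.\<close>
definition leibniz_action ::
  "('k::field \<Rightarrow> 'm::ab_group_add \<Rightarrow> 'm) \<Rightarrow> ('m \<Rightarrow> 'm \<Rightarrow> 'm) \<Rightarrow>
   ('k \<Rightarrow> 'n::ab_group_add \<Rightarrow> 'n) \<Rightarrow> ('n \<Rightarrow> 'n \<Rightarrow> 'n) \<Rightarrow>
   ('n \<Rightarrow> 'm \<Rightarrow> 'm) \<Rightarrow> ('m \<Rightarrow> 'n \<Rightarrow> 'm) \<Rightarrow> bool" where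
  "leibniz_action sM brM sN brN act1 act2 \<longleftrightarrow>
     bilinear_map sN sM sM act1 \<and> bilinear_map sM sN sM act2 \<and>
     (\<forall>n m m'. act1 n (brM m m') = brM (act1 n m) m' - brM (act1 n m') m) \<and>
     (\<forall>m n m'. brM m (act1 n m') = brM (act2 m n) m' - act2 (brM m m') n) \<and>
     (\<forall>m m' n. brM m (act2 m' n) = act2 (brM m m') n - brM (act2 m n) m') \<and>
     (\<forall>m n n'. act2 m (brN n n') = act2 (act2 m n) n' - act2 (act2 m n') n) \<and>
     (\<forall>n m n'. act1 n (act2 m n') = act2 (act1 n m) n' - act1 (brN n n') m) \<and>
     (\<forall>n n' m. act1 n (act1 n' m) = act1 (brN n n') m - act2 (act1 n m) n')"

definition leibniz_crossed_module ::
  "('k::field \<Rightarrow> 'm::ab_group_add \<Rightarrow> 'm) \<Rightarrow> ('m \<Rightarrow> 'm \<Rightarrow> 'm) \<Rightarrow>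
   ('k \<Rightarrow> 'n::ab_group_add \<Rightarrow> 'n) \<Rightarrow> ('n \<Rightarrow> 'n \<Rightarrow> 'n) \<Rightarrow>
   ('n \<Rightarrow> 'm \<Rightarrow> 'm) \<Rightarrow> ('m \<Rightarrow> 'n \<Rightarrow> 'm) \<Rightarrow> ('m \<Rightarrow> 'n) \<Rightarrow> bool" where
  "leibniz_crossed_module sM brM sN brN act1 act2 d \<longleftrightarrow>
     leibniz_algebra sM brM \<and> leibniz_algebra sN brN \<and>
     leibniz_action sM brM sN brN act1 act2 \<and>
     leibniz_hom sM brM sN brN d \<and>
     (\<forall>n m. d (act1 n m) = brN n (d m)) \<and>
     (\<forall>m n. d (act2 m n) = brN (d m) n) \<and>
     (\<forall>m m'. act1 (d m) m' = brM m m') \<and>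
     (\<forall>m m'. brM m m' = act2 m (d m'))"

text \<open>A braiding: br1 = \<open>{-,-}\<close>, br2 = \<open>\<langle>-,-\<rangle>\<close>.\<close>
definition leibniz_braiding ::
  "('k::field \<Rightarrow> 'm::ab_group_add \<Rightarrow> 'm) \<Rightarrow> ('m \<Rightarrow> 'm \<Rightarrow> 'm) \<Rightarrow>
   ('k \<Rightarrow> 'n::ab_group_add \<Rightarrow> 'n) \<Rightarrow> ('n \<Rightarrow> 'n \<Rightarrow> 'n) \<Rightarrow>
   ('n \<Rightarrow> 'm \<Rightarrow> 'm) \<Rightarrow> ('m \<Rightarrow> 'n \<Rightarrow> 'm) \<Rightarrow> ('m \<Rightarrow> 'n) \<Rightarrow>
   ('n \<Rightarrow> 'n \<Rightarrow> 'm) \<Rightarrow> ('n \<Rightarrow> 'n \<Rightarrow> 'm) \<Rightarrow> bool" where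
  "leibniz_braiding sM brM sN brN act1 act2 d br1 br2 \<longleftrightarrow>
     bilinear_map sN sN sM br1 \<and> bilinear_map sN sN sM br2 \<and>
     (\<forall>n n'. d (br1 n n') = brN n n' \<and> d (br2 n n') = brN n n') \<and>
     (\<forall>m m'. br1 (d m) (d m') = brM m m' \<and> br2 (d m) (d m') = brM m m') \<and>
     (\<forall>m n. br1 (d m) n = act2 m n \<and> br2 (d m) n = act2 m n) \<and>
     (\<forall>n m. br1 n (d m) = act1 n m \<and> br2 n (d m) = act1 n m) \<and>
     (\<forall>n n' n''. br1 n (brN n' n'') = br1 (brN n n') n'' - br1 (brN n n'') n') \<and>
     (\<forall>n n' n''. br2 n (brN n' n'') = br1 (brN n n') n'' - br2 (brN n n'') n') \<and>
     (\<forall>n n' n''. br1 n (brN n' n'') = br1 (brN n n') n'' - br2 (brN n n'') n') \<and>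
     (\<forall>n n' n''. br2 n (brN n' n'') = br2 (brN n n') n'' - br2 (brN n n'') n')"

definition lie_action ::
  "('k::field \<Rightarrow> 'm::ab_group_add \<Rightarrow> 'm) \<Rightarrow> ('m \<Rightarrow> 'm \<Rightarrow> 'm) \<Rightarrow>
   ('k \<Rightarrow> 'n::ab_group_add \<Rightarrow> 'n) \<Rightarrow> ('n \<Rightarrow> 'n \<Rightarrow> 'n) \<Rightarrow> ('n \<Rightarrow> 'm \<Rightarrow> 'm) \<Rightarrow> bool" where
  "lie_action sM brM sN brN act \<longleftrightarrow>
     bilinear_map sN sM sM act \<and>
     (\<forall>n n' m. act (brN n n') m = act n (act n' m) - act n' (act n m)) \<and>
     (\<forall>n m m'. act n (brM m m') = brM (act n m) m' + brM m (act n m'))"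

definition lie_crossed_module ::
  "('k::field \<Rightarrow> 'm::ab_group_add \<Rightarrow> 'm) \<Rightarrow> ('m \<Rightarrow> 'm \<Rightarrow> 'm) \<Rightarrow>
   ('k \<Rightarrow> 'n::ab_group_add \<Rightarrow> 'n) \<Rightarrow> ('n \<Rightarrow> 'n \<Rightarrow> 'n) \<Rightarrow>
   ('n \<Rightarrow> 'm \<Rightarrow> 'm) \<Rightarrow> ('m \<Rightarrow> 'n) \<Rightarrow> bool" where
  "lie_crossed_module sM brM sN brN act d \<longleftrightarrow>
     lie_algebra sM brM \<and> lie_algebra sN brN \<and>
     lie_action sM brM sN brN act \<and>
     leibniz_hom sM brM sN brN d \<and>
     (\<forall>n m. d (act n m) = brN n (d m)) \<and>
     (\<forall>m m'. act (d m) m' = brM m m')"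

definition lie_braiding ::
  "('k::field \<Rightarrow> 'm::ab_group_add \<Rightarrow> 'm) \<Rightarrow> ('m \<Rightarrow> 'm \<Rightarrow> 'm) \<Rightarrow>
   ('k \<Rightarrow> 'n::ab_group_add \<Rightarrow> 'n) \<Rightarrow> ('n \<Rightarrow> 'n \<Rightarrow> 'n) \<Rightarrow>
   ('n \<Rightarrow> 'm \<Rightarrow> 'm) \<Rightarrow> ('m \<Rightarrow> 'n) \<Rightarrow> ('n \<Rightarrow> 'n \<Rightarrow> 'm) \<Rightarrow> bool" where
  "lie_braiding sM brM sN brN act d br \<longleftrightarrow>
     bilinear_map sN sN sM br \<and>
     (\<forall>n n'. d (br n n') = brN n n') \<and>
     (\<forall>m m'. br (d m) (d m') = brM m m') \<and>
     (\<forall>m n. br (d m) n = - act n m) \<and>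
     (\<forall>n m. br n (d m) = act n m) \<and>
     (\<forall>n n' n''. br n (brN n' n'') = br (brN n n') n'' - br (brN n n'') n') \<and>
     (\<forall>n n' n''. br (brN n n') n'' = br n (brN n' n'') - br n' (brN n n''))"

end

theory Submission
  imports Defs
begin

lemma two_zero:
  assumes vs: "vector_space (s::'k::field \<Rightarrow> 'a::ab_group_add \<Rightarrow> 'a)"
    and c: "(2::'k) \<noteq> 0" and h: "(x::'a) + x = 0"
  shows "x = 0"
proof -
  interpret vector_space s by (rule vs)
  have "s 2 x = s (1+1) x" by simp
  also have "\<dots> = x + x"
    by (simp only: scale_left_distrib scale_one)
  finally have "s 2 x = 0" using h by simp
  thus ?thesis using c by simp
qed

lemma bil_neg2:
  assumes "bilinear_map sA sB sC f" shows "f x (- y) = - f x y"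
proof -
  have "Vector_Spaces.linear sB sC (f x)" using assms unfolding bilinear_map_def by auto
  from module_hom.neg[OF this[folded module_hom_iff_linear]] show ?thesis .
qed

theorem mainTheorem5:
  fixes sM :: "'k::field \<Rightarrow> 'm::ab_group_add \<Rightarrow> 'm" and brM :: "'m \<Rightarrow> 'm \<Rightarrow> 'm"
    and sN :: "'k \<Rightarrow> 'n::ab_group_add \<Rightarrow> 'n" and brN :: "'n \<Rightarrow> 'n \<Rightarrow> 'n"
    and act1 :: "'n \<Rightarrow> 'm \<Rightarrow> 'm" and act2 :: "'m \<Rightarrow> 'n \<Rightarrow> 'm" and d :: "'m \<Rightarrow> 'n"
    and br1 br2 :: "'n \<Rightarrow> 'n \<Rightarrow> 'm"
  assumes char: "(2::'k) \<noteq> 0"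
    and xm: "leibniz_crossed_module sM brM sN brN act1 act2 d"
    and braid: "leibniz_braiding sM brM sN brN act1 act2 d br1 br2"
    and sym: "\<forall>n n'. br1 n n' = - br2 n' n"
  shows "(\<forall>m n. act2 m n = - act1 n m) \<and>
         lie_crossed_module sM brM sN brN act1 d \<and>
         lie_braiding sM brM sN brN act1 d br1"
proof -
  have LM: "leibniz_algebra sM brM" and LN: "leibniz_algebra sN brN"
    and LA: "leibniz_action sM brM sN brN act1 act2"
    and H: "leibniz_hom sM brM sN brN d"
    and x1: "\<forall>n m. d (act1 n m) = brN n (d m)"
    and x3: "\<forall>m m'. act1 (d m) m' = brM m m'"
    using xm unfolding leibniz_crossed_module_def by auto
  have vM: "vector_space sM" and vN: "vector_space sN"
    using LM LN unfolding leibniz_algebra_def by auto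
  have lebM: "\<And>x y z. brM x (brM y z) = brM (brM x y) z - brM (brM x z) y"
    using LM unfolding leibniz_algebra_def by auto
  have lebN: "\<And>x y z. brN x (brN y z) = brN (brN x y) z - brN (brN x z) y"
    using LN unfolding leibniz_algebra_def by auto
  have b_d: "\<And>n n'. d (br1 n n') = brN n n'" "\<And>n n'. d (br2 n n') = brN n n'"
    and b_dd: "\<And>m m'. br1 (d m) (d m') = brM m m'" "\<And>m m'. br2 (d m) (d m') = brM m m'"
    and b_dn: "\<And>m n. br1 (d m) n = act2 m n" "\<And>m n. br2 (d m) n = act2 m n"
    and b_nd: "\<And>m n. br1 n (d m) = act1 n m" "\<And>m n. br2 n (d m) = act1 n m"
    and b1: "\<And>n n' n''. br1 n (brN n' n'') = br1 (brN n n') n'' - br1 (brN n n'') n'"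
    and b3: "\<And>n n' n''. br1 n (brN n' n'') = br1 (brN n n') n'' - br2 (brN n n'') n'"
    using braid unfolding leibniz_braiding_def by auto
  have dlin: "Vector_Spaces.linear sM sN d" using H unfolding leibniz_hom_def by auto
  have dneg: "\<And>x. d (- x) = - d x"
    using module_hom.neg[OF dlin[folded module_hom_iff_linear]] .
  have antiN: "\<And>a b. brN a b = - brN b a"
  proof -
    fix a b
    have "brN a b = d (br1 a b)" using b_d by simp
    also have "\<dots> = d (- br2 b a)" using sym by simp
    also have "\<dots> = - brN b a" using dneg b_d by simp
    finally show "brN a b = - brN b a" .
  qed
  have antiM: "\<And>a b. brM a b = - brM b a"
  proof -
    fix a b
    have "brM a b = br1 (d a) (d b)" by (simp only: b_dd)
    also have "\<dots> = - br2 (d b) (d a)" by (rule sym[rule_format])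
    also have "\<dots> = - brM b a" by (simp only: b_dd)
    finally show "brM a b = - brM b a" .
  qed
  have a2: "\<And>m n. act2 m n = - act1 n m"
  proof -
    fix m n
    have "act2 m n = br1 (d m) n" by (simp only: b_dn)
    also have "\<dots> = - br2 n (d m)" by (rule sym[rule_format])
    also have "\<dots> = - act1 n m" by (simp only: b_nd)
    finally show "act2 m n = - act1 n m" .
  qed
  have zN: "\<And>x. brN x x = 0"
  proof -
    fix x
    have "brN x x + brN x x = 0" using antiN[of x x] by (simp add: eq_neg_iff_add_eq_0)
    thus "brN x x = 0" by (rule two_zero[OF vN char])
  qed
  have zM: "\<And>x. brM x x = 0"
  proof -
    fix x
    have "brM x x + brM x x = 0" using antiM[of x x] by (simp add: eq_neg_iff_add_eq_0)
    thus "brM x x = 0" by (rule two_zero[OF vM char])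
  qed
  have jacN: "\<And>x y z. brN x (brN y z) + brN y (brN z x) + brN z (brN x y) = 0"
  proof -
    fix x y z
    have "brN x (brN y z) = brN (brN x y) z - brN (brN x z) y" by (rule lebN)
    moreover have "brN (brN x y) z = - brN z (brN x y)" by (rule antiN)
    moreover have "brN (brN x z) y = - brN y (brN x z)" by (rule antiN)
    moreover have "brN x z = - brN z x" by (rule antiN)
    moreover have "brN y (- brN z x) = - brN y (brN z x)"
      by (rule bil_neg2[of sN sN sN]) (use LN in \<open>simp add: leibniz_algebra_def\<close>)
    ultimately show "brN x (brN y z) + brN y (brN z x) + brN z (brN x y) = 0"
      by (simp add: algebra_simps)
  qed
  have jacM: "\<And>x y z. brM x (brM y z) + brM y (brM z x) + brM z (brM x y) = 0"
  proof -
    fix x y z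
    have "brM x (brM y z) = brM (brM x y) z - brM (brM x z) y" by (rule lebM)
    moreover have "brM (brM x y) z = - brM z (brM x y)" by (rule antiM)
    moreover have "brM (brM x z) y = - brM y (brM x z)" by (rule antiM)
    moreover have "brM x z = - brM z x" by (rule antiM)
    moreover have "brM y (- brM z x) = - brM y (brM z x)"
      by (rule bil_neg2[of sM sM sM]) (use LM in \<open>simp add: leibniz_algebra_def\<close>)
    ultimately show "brM x (brM y z) + brM y (brM z x) + brM z (brM x y) = 0"
      by (simp add: algebra_simps)
  qed
  have lieM: "lie_algebra sM brM"
    using LM zM jacM unfolding leibniz_algebra_def lie_algebra_def by auto
  have lieN: "lie_algebra sN brN"
    using LN zN jacN unfolding leibniz_algebra_def lie_algebra_def by auto
  have A1: "\<And>n m m'. act1 n (brM m m') = brM (act1 n m) m' - brM (act1 n m') m"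
    and A6: "\<And>n n' m. act1 n (act1 n' m) = act1 (brN n n') m - act2 (act1 n m) n'"
    and Abil: "bilinear_map sN sM sM act1"
    using LA unfolding leibniz_action_def by auto
  have lact: "lie_action sM brM sN brN act1"
    unfolding lie_action_def
  proof (intro conjI allI)
    show "bilinear_map sN sM sM act1" by (rule Abil)
  next
    fix n n' m
    show "act1 (brN n n') m = act1 n (act1 n' m) - act1 n' (act1 n m)"
      using A6[of n n' m] a2[of "act1 n m" n'] by (simp add: algebra_simps)
  next
    fix n m m'
    show "act1 n (brM m m') = brM (act1 n m) m' + brM m (act1 n m')"
      using A1[of n m m'] antiM[of "act1 n m'" m] by (simp add: algebra_simps)
  qed
  have lcm: "lie_crossed_module sM brM sN brN act1 d"
    unfolding lie_crossed_module_def using lieM lieN lact H x1 x3 by auto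
  have bil1: "bilinear_map sN sN sM br1" using braid unfolding leibniz_braiding_def by auto
  have last: "\<And>n n' n''. br1 (brN n n') n'' = br1 n (brN n' n'') - br1 n' (brN n n'')"
  proof -
    fix n n' n''
    show "br1 (brN n n') n'' = br1 n (brN n' n'') - br1 n' (brN n n'')"
      using b1[of n n' n''] b3[of n n' n''] sym by (simp add: algebra_simps)
  qed
  have lb: "lie_braiding sM brM sN brN act1 d br1"
    unfolding lie_braiding_def using bil1 b_d b_dd b_dn a2 b_nd b1 last by auto
  show ?thesis using a2 lcm lb by auto
qed

end
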